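(* Let $\Lambda\subset\mathbb{R}^d$ be the closure of an open connected set with piecewise smooth boundary, let $F:\mathbb{R}^d\to\mathbb{R}^d$ and $v:\Lambda\to\mathbb{R}^d$ be such that for each $x\in\Lambda$ the problem $$\frac{d^2y(t,x)}{dt^2}=F(y(t,x)),\quad y(0,x)=x,\quad\frac{dy(0,x)}{dt}=v(x)$$ has a unique solution for all $t\in[0,\infty)$. Assume that $(F(y)-F(x),y-x)\ge0$ for all $x,y\in\mathbb{R}^d$ and $(v(x_2)-v(x_1),x_2-x_1)\ge0$ for all $x_1,x_2\in\Lambda$. Then there are no collisions on $[0,\infty)$: $y(t,x_1)\ne y(t,x_2)$ for all $t\ge0$ and all $x_1\ne x_2$ in $\Lambda$.
   Context: $(\cdot,\cdot)$ is the standard Euclidean inner product on $\mathbb{R}^d$. Each point of $\Lambda$ is a non-interacting point particle with initial position $x$ and initial velocity $v(x)$. *)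

theory Defs
  imports "HOL-Analysis.Analysis"
begin

definition is_newton_solution ::
  "('a::euclidean_space \<Rightarrow> 'a) \<Rightarrow> 'a \<Rightarrow> 'a \<Rightarrow> (real \<Rightarrow> 'a) \<Rightarrow> bool" where
  "is_newton_solution F x0 v0 z \<longleftrightarrow>
     (\<exists>z'. (\<forall>t\<ge>0. (z has_vector_derivative z' t) (at t within {0..})
                  \<and> (z' has_vector_derivative F (z t)) (at t within {0..}))
           \<and> z 0 = x0 \<and> z' 0 = v0)"

end

theory Submission
  imports Defs
begin

lemma mono_from_deriv:
  fixes g g' :: "real \<Rightarrow> real"
  assumes d: "\<And>t. t \<ge> 0 \<Longrightarrow> (g has_real_derivative g' t) (at t within {0..})"
    and nn: "\<And>t. t \<ge> 0 \<Longrightarrow> g' t \<ge> 0"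
    and t: "t \<ge> 0"
  shows "g 0 \<le> g t"
proof (rule DERIV_nonneg_imp_increasing_open[OF t])
  fix s :: real assume s: "0 < s" "s < t"
  have "s \<in> interior {0::real..}" using s by simp
  hence "at s within {0..} = at s" by (rule at_within_interior)
  hence "DERIV g s :> g' s" using d[of s] s by simp
  thus "\<exists>y. DERIV g s :> y \<and> y \<ge> 0" using nn[of s] s by auto
next
  have "continuous_on {0..} g"
    unfolding continuous_on_eq_continuous_within
    using d by (auto intro: DERIV_continuous)
  thus "continuous_on {0..t} g" by (rule continuous_on_subset) auto
qed

theorem theorem4:
  fixes U :: "'a::euclidean_space set"
    and \<Lambda> :: "'a set"
    and F :: "'a \<Rightarrow> 'a"
    and v :: "'a \<Rightarrow> 'a"
    and y :: "real \<Rightarrow> 'a \<Rightarrow> 'a"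
  assumes "open U" and "connected U" and "\<Lambda> = closure U"
    and sol: "\<forall>x\<in>\<Lambda>. is_newton_solution F x (v x) (\<lambda>t. y t x)"
    and uniq: "\<forall>x\<in>\<Lambda>. \<forall>z. is_newton_solution F x (v x) z \<longrightarrow> (\<forall>t\<ge>0. z t = y t x)"
    and monF: "\<forall>x1 x2. (F x2 - F x1) \<bullet> (x2 - x1) \<ge> 0"
    and monv: "\<forall>x1\<in>\<Lambda>. \<forall>x2\<in>\<Lambda>. (v x2 - v x1) \<bullet> (x2 - x1) \<ge> 0"
  shows "\<forall>t\<ge>0. \<forall>x1\<in>\<Lambda>. \<forall>x2\<in>\<Lambda>. x1 \<noteq> x2 \<longrightarrow> y t x1 \<noteq> y t x2"
proof (intro allI impI ballI)
  fix t :: real and x1 x2 assume t: "t \<ge> 0" and x1: "x1 \<in> \<Lambda>" and x2: "x2 \<in> \<Lambda>" and ne: "x1 \<noteq> x2"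
  obtain p1 where p1: "\<forall>t\<ge>0. ((\<lambda>t. y t x1) has_vector_derivative p1 t) (at t within {0..})
                  \<and> (p1 has_vector_derivative F (y t x1)) (at t within {0..})" "y 0 x1 = x1" "p1 0 = v x1"
    using sol x1 unfolding is_newton_solution_def by blast
  obtain p2 where p2: "\<forall>t\<ge>0. ((\<lambda>t. y t x2) has_vector_derivative p2 t) (at t within {0..})
                  \<and> (p2 has_vector_derivative F (y t x2)) (at t within {0..})" "y 0 x2 = x2" "p2 0 = v x2"
    using sol x2 unfolding is_newton_solution_def by blast
  define w where "w = (\<lambda>t. y t x2 - y t x1)"
  define w' where "w' = (\<lambda>t. p2 t - p1 t)"
  have dw: "(w has_vector_derivative w' s) (at s within {0..})" if "s \<ge> 0" for s
    unfolding w_def w'_def using p1(1) p2(1) that by (auto intro!: derivative_intros)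
  have dw': "(w' has_vector_derivative (F (y s x2) - F (y s x1))) (at s within {0..})" if "s \<ge> 0" for s
    unfolding w'_def using p1(1) p2(1) that by (auto intro!: derivative_intros)
  define g where "g = (\<lambda>t. w t \<bullet> w' t)"
  have dg: "(g has_real_derivative (w s \<bullet> (F (y s x2) - F (y s x1)) + w' s \<bullet> w' s)) (at s within {0..})"
    if "s \<ge> 0" for s
    unfolding g_def has_real_derivative_iff_has_vector_derivative
    by (rule bounded_bilinear.has_vector_derivative[OF bounded_bilinear_inner dw[OF that] dw'[OF that]])
  have gnn: "w s \<bullet> (F (y s x2) - F (y s x1)) + w' s \<bullet> w' s \<ge> 0" for s
    using monF unfolding w_def by (simp add: inner_commute add_nonneg_nonneg)
  have g0: "g 0 \<ge> 0" using monv x1 x2 p1 p2 unfolding g_def w_def w'_def by (simp add: inner_commute)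
  have gpos: "g s \<ge> 0" if "s \<ge> 0" for s
    using mono_from_deriv[OF dg gnn that] g0 by simp
  define h where "h = (\<lambda>t. w t \<bullet> w t)"
  have dh: "(h has_real_derivative (w s \<bullet> w' s + w' s \<bullet> w s)) (at s within {0..})"
    if "s \<ge> 0" for s
    unfolding h_def has_real_derivative_iff_has_vector_derivative
    by (rule bounded_bilinear.has_vector_derivative[OF bounded_bilinear_inner dw[OF that] dw[OF that]])
  have hnn: "w s \<bullet> w' s + w' s \<bullet> w s \<ge> 0" if "s \<ge> 0" for s
    using gpos[OF that] unfolding g_def by (simp add: inner_commute)
  have "h 0 \<le> h t" using mono_from_deriv[OF dh hnn t] by simp
  moreover have "h 0 > 0" using ne p1(2) p2(2) unfolding h_def w_def by simp
  ultimately have "h t > 0" by simp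
  thus "y t x1 \<noteq> y t x2" unfolding h_def w_def by auto
qed

end
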